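(* For every $A>0$ there is a constant $\kappa(A)>0$, depending only on $A$, such that for diffusive deposition, every $N$, every $\sigma\in\mathcal X_e(A)$ and every $i\in G_N$, $$P\big(\text{explorer attaches to pile } i\,\big|\,\sigma\big)\ge\kappa(A)\frac{\sigma_i^2}{N}.$$
   Context: Diffusive deposition: for $N\ge2$, $G_N=\{1,\dots,N\}$, a configuration $\sigma\in\mathbb N^N$ gives column (pile) heights. Given $\sigma$, an explorer is a walk $(X_n,Z_n)_{n\ge0}$ with $(X_n)$ i.i.d. uniform on $G_N$, $Z_0=\max_i\sigma_i+1$, and $(Z_{n+1}-Z_n)$ i.i.d. uniform on $\{-1,1\}$ independent of $(X_n)$. With $n^*=\inf\{n:Z_n\le\sigma_{X_n}\}$, the explorer attaches to pile $X_{n^*}$. The early regime is $\mathcal X_e(A)=\{\sigma\in\mathbb N^N:\ \sum_{i=1}^N\sigma_i^2\le AN,\ \sum_{i=1}^N\sigma_i<N/2\}$. *)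

theory Defs
  imports "HOL-Probability.Probability"
begin

text \<open>One step of the explorer's randomness: the column X_n, uniform on G_N = {1..N},
  and the increment Z_{n+1} - Z_n, uniform on {-1,1}, independent of each other.\<close>
definition explorer_step :: "nat \<Rightarrow> (nat \<times> int) pmf" where
  "explorer_step N = pair_pmf (pmf_of_set {1..N}) (pmf_of_set {-1, 1})"

definition explorer_space :: "nat \<Rightarrow> (nat \<times> int) stream measure" where
  "explorer_space N = stream_space (measure_pmf (explorer_step N))"

definition expl_X :: "(nat \<times> int) stream \<Rightarrow> nat \<Rightarrow> nat" where
  "expl_X \<omega> n = fst (\<omega> !! n)"

definition expl_Z :: "nat \<Rightarrow> (nat \<Rightarrow> nat) \<Rightarrow> (nat \<times> int) stream \<Rightarrow> nat \<Rightarrow> int" where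
  "expl_Z N \<sigma> \<omega> n = int (Max (\<sigma> ` {1..N})) + 1 + (\<Sum>k<n. snd (\<omega> !! k))"

definition attaches_to :: "nat \<Rightarrow> (nat \<Rightarrow> nat) \<Rightarrow> nat \<Rightarrow> (nat \<times> int) stream set" where
  "attaches_to N \<sigma> i = {\<omega> \<in> space (explorer_space N).
     \<exists>n. expl_Z N \<sigma> \<omega> n \<le> int (\<sigma> (expl_X \<omega> n))
        \<and> (\<forall>m<n. \<not> expl_Z N \<sigma> \<omega> m \<le> int (\<sigma> (expl_X \<omega> m)))
        \<and> expl_X \<omega> n = i}"

definition attach_prob :: "nat \<Rightarrow> (nat \<Rightarrow> nat) \<Rightarrow> nat \<Rightarrow> real" where
  "attach_prob N \<sigma> i = measure (explorer_space N) (attaches_to N \<sigma> i)"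

definition early_regime :: "real \<Rightarrow> nat \<Rightarrow> (nat \<Rightarrow> nat) \<Rightarrow> bool" where
  "early_regime A N \<sigma> \<longleftrightarrow>
     real (\<Sum>i=1..N. (\<sigma> i)^2) \<le> A * real N \<and> real (\<Sum>i=1..N. \<sigma> i) < real N / 2"

end

theory Submission
  imports Defs
begin


definition Wk :: "int \<Rightarrow> (nat\<times>int) stream \<Rightarrow> nat \<Rightarrow> int" where
  "Wk z \<omega> n = z + (\<Sum>k<n. snd (\<omega> !! k))"

definition Ev :: "(nat\<Rightarrow>nat) \<Rightarrow> nat \<Rightarrow> int \<Rightarrow> (nat\<times>int) stream set" where
  "Ev \<sigma> i z = {\<omega>. \<exists>n. Wk z \<omega> n \<le> int (\<sigma> (fst (\<omega> !! n)))
        \<and> (\<forall>m<n. \<not> Wk z \<omega> m \<le> int (\<sigma> (fst (\<omega> !! m)))) \<and> fst (\<omega> !! n) = i}"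

lemma Wk_0[simp]: "Wk z \<omega> 0 = z" by (simp add: Wk_def)
lemma Wk_Suc: "Wk z (x ## \<omega>) (Suc n) = Wk (z + snd x) \<omega> n"
  unfolding Wk_def by (induct n) (simp_all add: algebra_simps)

lemma Ev_Stream: "(x ## \<omega> \<in> Ev \<sigma> i z) \<longleftrightarrow>
   (z \<le> int (\<sigma> (fst x)) \<and> fst x = i) \<or> (\<not> z \<le> int (\<sigma> (fst x)) \<and> \<omega> \<in> Ev \<sigma> i (z + snd x))"
proof
  assume "x ## \<omega> \<in> Ev \<sigma> i z"
  then obtain n where n: "Wk z (x##\<omega>) n \<le> int (\<sigma> (fst ((x##\<omega>) !! n)))"
     "\<forall>m<n. \<not> Wk z (x##\<omega>) m \<le> int (\<sigma> (fst ((x##\<omega>) !! m)))" "fst ((x##\<omega>) !! n) = i"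
    unfolding Ev_def by blast
  show "(z \<le> int (\<sigma> (fst x)) \<and> fst x = i) \<or> (\<not> z \<le> int (\<sigma> (fst x)) \<and> \<omega> \<in> Ev \<sigma> i (z + snd x))"
  proof (cases n)
    case 0 then show ?thesis using n by simp
  next
    case (Suc k)
    have "\<not> z \<le> int (\<sigma> (fst x))" using n(2) Suc by (metis Wk_0 zero_less_Suc snth.simps(1) stream.sel(1))
    moreover have "\<omega> \<in> Ev \<sigma> i (z + snd x)" unfolding Ev_def
    proof (intro CollectI exI[of _ k] conjI allI impI)
      show "Wk (z + snd x) \<omega> k \<le> int (\<sigma> (fst (\<omega> !! k)))" using n(1) Suc by (simp add: Wk_Suc)
      show "fst (\<omega> !! k) = i" using n(3) Suc by simp
      fix m assume "m < k"
      then show "\<not> Wk (z + snd x) \<omega> m \<le> int (\<sigma> (fst (\<omega> !! m)))"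
        using n(2)[rule_format, of "Suc m"] Suc by (simp add: Wk_Suc)
    qed
    ultimately show ?thesis by blast
  qed
next
  assume "(z \<le> int (\<sigma> (fst x)) \<and> fst x = i) \<or> (\<not> z \<le> int (\<sigma> (fst x)) \<and> \<omega> \<in> Ev \<sigma> i (z + snd x))"
  then show "x ## \<omega> \<in> Ev \<sigma> i z"
  proof
    assume "z \<le> int (\<sigma> (fst x)) \<and> fst x = i"
    then show ?thesis unfolding Ev_def by (intro CollectI exI[of _ 0]) auto
  next
    assume h: "\<not> z \<le> int (\<sigma> (fst x)) \<and> \<omega> \<in> Ev \<sigma> i (z + snd x)"
    then obtain k where k: "Wk (z + snd x) \<omega> k \<le> int (\<sigma> (fst (\<omega> !! k)))"
     "\<forall>m<k. \<not> Wk (z + snd x) \<omega> m \<le> int (\<sigma> (fst (\<omega> !! m)))" "fst (\<omega> !! k) = i"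
      unfolding Ev_def by blast
    show ?thesis unfolding Ev_def
    proof (intro CollectI exI[of _ "Suc k"] conjI allI impI)
      show "Wk z (x ## \<omega>) (Suc k) \<le> int (\<sigma> (fst ((x ## \<omega>) !! Suc k)))" using k(1) by (simp add: Wk_Suc)
      show "fst ((x ## \<omega>) !! Suc k) = i" using k(3) by simp
      fix m assume "m < Suc k"
      then show "\<not> Wk z (x ## \<omega>) m \<le> int (\<sigma> (fst ((x ## \<omega>) !! m)))"
        using k(2) h by (cases m) (auto simp: Wk_Suc)
    qed
  qed
qed

lemma sum_stake: "sum_list (map snd (stake m \<omega>)) = (\<Sum>k<m. snd (\<omega> !! k))"
  by (induct m arbitrary: \<omega>) (simp_all add: sum.lessThan_Suc_shift del: sum.lessThan_Suc)

lemma take_stake': "m \<le> n \<Longrightarrow> take m (stake n \<omega>) = stake m \<omega>"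
  by (simp add: take_stake)

lemma Ev_meas: "Ev \<sigma> i z \<in> sets (stream_space (measure_pmf p))"
proof -
  define R where "R n l \<longleftrightarrow> (z + sum_list (map snd (take n l)) \<le> int (\<sigma> (fst (l!n))) \<and>
     (\<forall>m<n. \<not> z + sum_list (map snd (take m l)) \<le> int (\<sigma> (fst (l!m)))) \<and> fst (l!n) = i)" for n l
  have st: "stake (Suc n) \<omega> ! m = \<omega> !! m" if "m \<le> n" for n m \<omega> using that by (simp add: stake_nth less_Suc_eq_le del: stake.simps)
  have "Ev \<sigma> i z = {\<omega> \<in> space (stream_space (measure_pmf p)). \<exists>n. R n (stake (Suc n) \<omega>)}"
  proof -
    have "R n (stake (Suc n) \<omega>) \<longleftrightarrow> (Wk z \<omega> n \<le> int (\<sigma> (fst (\<omega> !! n)))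
        \<and> (\<forall>m<n. \<not> Wk z \<omega> m \<le> int (\<sigma> (fst (\<omega> !! m)))) \<and> fst (\<omega> !! n) = i)" for n \<omega>
      unfolding R_def Wk_def by (simp add: take_stake' sum_stake st del: stake.simps)
    then show ?thesis unfolding Ev_def space_stream_space by simp
  qed
  also have "\<dots> \<in> sets (stream_space (measure_pmf p))"
  proof -
    have st: "stake (Suc n) \<in> measurable (stream_space (measure_pmf p)) (count_space (UNIV :: (nat\<times>int) list set))" for n
      using measurable_stake[of "Suc n"]
      by (simp add: measurable_cong_sets[OF sets_stream_space_cong[OF sets_measure_pmf_count_space] refl])
    have [measurable]: "Measurable.pred (stream_space (measure_pmf p)) (\<lambda>\<omega>. R n (stake (Suc n) \<omega>))" for n
      using st by (rule measurable_compose) simp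
    show ?thesis by measurable
  qed
  finally show ?thesis .
qed

definition qf :: "nat \<Rightarrow> (nat\<Rightarrow>nat) \<Rightarrow> nat \<Rightarrow> int \<Rightarrow> real" where
  "qf N \<sigma> i z = measure (explorer_space N) (Ev \<sigma> i z)"

lemma q_rec:
  assumes N: "N \<ge> 1" and i: "i \<in> {1..N}"
  shows "qf N \<sigma> i z = (if z \<le> int (\<sigma> i) then 1 / real N else 0)
     + real (card {a\<in>{1..N}. \<not> z \<le> int (\<sigma> a)}) / real N * ((qf N \<sigma> i (z-1) + qf N \<sigma> i (z+1)) / 2)"
proof -
  let ?p = "explorer_step N"
  let ?S = "stream_space (measure_pmf ?p)"
  define val where "val t = (if z \<le> int (\<sigma> (fst t)) \<and> fst t = i then 1
      else if \<not> z \<le> int (\<sigma> (fst t)) then qf N \<sigma> i (z + snd t) else 0)" for t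
  have val_nn: "val t \<ge> 0" for t unfolding val_def qf_def by simp
  have meas: "{x \<in> space ?S. x \<in> Ev \<sigma> i z} \<in> sets ?S"
    using Ev_meas[of \<sigma> i z ?p] by (simp add: space_stream_space)
  have shift: "\<P>(x in ?S. t ## x \<in> Ev \<sigma> i z) = val t" for t
  proof -
    have "{x \<in> space ?S. t ## x \<in> Ev \<sigma> i z} =
       (if z \<le> int (\<sigma> (fst t)) \<and> fst t = i then space ?S
        else if \<not> z \<le> int (\<sigma> (fst t)) then Ev \<sigma> i (z + snd t) else {})"
      by (auto simp: Ev_Stream space_stream_space)
    then show ?thesis
      using prob_space.prob_space[OF prob_space.prob_space_stream_space[OF prob_space_measure_pmf]]
      by (auto simp: val_def qf_def explorer_space_def)
  qed
  have setp: "set_pmf ?p = {1..N} \<times> {-1,1}" using N by (simp add: explorer_step_def)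
  have fin: "finite (set_pmf ?p)" by (simp add: setp)
  have pmfp: "pmf ?p t = 1 / (2 * real N)" if "t \<in> {1..N} \<times> {-1,1}" for t
    using that N by (cases t) (auto simp: explorer_step_def pmf_pair)
  have "ennreal (qf N \<sigma> i z) = ennreal (\<P>(x in ?S. x \<in> Ev \<sigma> i z))"
    by (simp add: qf_def explorer_space_def space_stream_space)
  also have "\<dots> = (\<integral>\<^sup>+t. ennreal (val t) \<partial>measure_pmf ?p)"
    using prob_space.prob_stream_space[OF prob_space_measure_pmf meas] shift by simp
  also have "\<dots> = (\<Sum>t\<in>set_pmf ?p. ennreal (val t) * pmf ?p t)"
    by (rule nn_integral_measure_pmf_finite[OF fin]) simp
  also have "\<dots> = (\<Sum>t\<in>{1..N} \<times> {-1,1}. ennreal (val t / (2 * real N)))"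
    unfolding setp
  proof (intro sum.cong refl)
    fix t assume "t \<in> {1..N} \<times> {-1,1::int}"
    then show "ennreal (val t) * ennreal (pmf ?p t) = ennreal (val t / (2 * real N))"
    proof -
      have "ennreal (val t / (2 * real N)) = ennreal (val t * (1 / (2 * real N)))" by simp
      also have "\<dots> = ennreal (val t) * ennreal (1 / (2 * real N))" by (rule ennreal_mult'[OF val_nn])
      finally show ?thesis using pmfp[OF \<open>t \<in> _\<close>] by simp
    qed
  qed
  also have "\<dots> = ennreal (\<Sum>t\<in>{1..N} \<times> {-1,1}. val t / (2 * real N))"
    using val_nn by (intro sum_ennreal) simp
  finally have e: "qf N \<sigma> i z = (\<Sum>t\<in>{1..N} \<times> {-1,1}. val t / (2 * real N))"
    using val_nn by (subst (asm) ennreal_inj) (auto simp: qf_def intro!: sum_nonneg)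
  also have "\<dots> = (\<Sum>a\<in>{1..N}. \<Sum>d\<in>{-1,1::int}. val (a,d) / (2 * real N))"
    by (subst sum.cartesian_product) (simp add: case_prod_beta')
  also have "\<dots> = (\<Sum>a\<in>{1..N}. (val (a,-1) + val (a,1)) / (2 * real N))"
    by (simp add: add_divide_distrib)
  also have "\<dots> = (\<Sum>a\<in>{1..N}. (if a = i then (if z \<le> int (\<sigma> i) then 1 / real N else 0) else 0)
       + (if \<not> z \<le> int (\<sigma> a) then (qf N \<sigma> i (z-1) + qf N \<sigma> i (z+1)) / (2 * real N) else 0))"
    by (intro sum.cong refl) (auto simp: val_def add_divide_distrib)
  also have "\<dots> = (if z \<le> int (\<sigma> i) then 1 / real N else 0)
     + real (card {a\<in>{1..N}. \<not> z \<le> int (\<sigma> a)}) * ((qf N \<sigma> i (z-1) + qf N \<sigma> i (z+1)) / (2 * real N))"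
    using i by (simp add: sum.distrib sum.If_cases Int_def)
  finally show ?thesis by simp
qed



definition Fc :: "nat \<Rightarrow> (nat\<Rightarrow>nat) \<Rightarrow> int \<Rightarrow> real" where
  "Fc N \<sigma> z = real (card {a\<in>{1..N}. z \<le> int (\<sigma> a)}) / real N"
definition cc :: "nat \<Rightarrow> (nat\<Rightarrow>nat) \<Rightarrow> int \<Rightarrow> real" where
  "cc N \<sigma> z = real (card {a\<in>{1..N}. \<not> z \<le> int (\<sigma> a)}) / real N"
definition tp :: "nat \<Rightarrow> int \<Rightarrow> real" where
  "tp x y = max 0 (real x - real_of_int y + 1)"
definition TT :: "nat \<Rightarrow> (nat\<Rightarrow>nat) \<Rightarrow> int \<Rightarrow> real" where
  "TT N \<sigma> y = (\<Sum>a\<in>{1..N}. tp (\<sigma> a) y) / real N"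
definition Ps :: "nat \<Rightarrow> (nat\<Rightarrow>nat) \<Rightarrow> int \<Rightarrow> int \<Rightarrow> real" where
  "Ps N \<sigma> b z = (\<Sum>y\<in>{b+1..z}. TT N \<sigma> y)"
definition ww :: "nat \<Rightarrow> (nat\<Rightarrow>nat) \<Rightarrow> int \<Rightarrow> int \<Rightarrow> real" where
  "ww N \<sigma> b z = exp (- 4 * Ps N \<sigma> b z)"

lemma cc_Fc: assumes "N \<ge> 1" shows "cc N \<sigma> z = 1 - Fc N \<sigma> z"
proof -
  have "card {a\<in>{1..N}. z \<le> int (\<sigma> a)} + card {a\<in>{1..N}. \<not> z \<le> int (\<sigma> a)} = card {1..N}"
  proof -
    have u: "{a\<in>{1..N}. z \<le> int (\<sigma> a)} \<union> {a\<in>{1..N}. \<not> z \<le> int (\<sigma> a)} = {1..N}" by auto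
    show ?thesis by (subst card_Un_disjoint[symmetric]) (auto simp only: u, auto)
  qed
  then have "real (card {a\<in>{1..N}. \<not> z \<le> int (\<sigma> a)}) = real N - real (card {a\<in>{1..N}. z \<le> int (\<sigma> a)})"
    by simp
  then show ?thesis using assms unfolding cc_def Fc_def by (simp add: diff_divide_distrib)
qed

lemma Fc_nonneg: "0 \<le> Fc N \<sigma> z" by (simp add: Fc_def)
lemma cc_nonneg: "0 \<le> cc N \<sigma> z" by (simp add: cc_def)
lemma cc_le1: "N \<ge> 1 \<Longrightarrow> cc N \<sigma> z \<le> 1" using cc_Fc[of N \<sigma> z] Fc_nonneg[of N \<sigma> z] by simp

lemma cc_neg: "z \<le> 0 \<Longrightarrow> cc N \<sigma> z = 0"
  unfolding cc_def by (subgoal_tac "{a\<in>{1..N}. \<not> z \<le> int (\<sigma> a)} = {}") auto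

lemma Fc_half:
  assumes "N \<ge> 1" "1 \<le> z" "real (\<Sum>a=1..N. \<sigma> a) < real N / 2"
  shows "Fc N \<sigma> z \<le> 1/2"
proof -
  let ?S = "{a\<in>{1..N}. z \<le> int (\<sigma> a)}"
  have "card ?S = (\<Sum>a\<in>?S. 1::nat)" by simp
  also have "\<dots> \<le> (\<Sum>a\<in>?S. \<sigma> a)" using assms(2) by (intro sum_mono) auto
  also have "\<dots> \<le> (\<Sum>a=1..N. \<sigma> a)" by (intro sum_mono2) auto
  finally have "real (card ?S) \<le> real N / 2" using assms(3) by linarith
  then show ?thesis using assms(1) unfolding Fc_def by (simp add: divide_simps)
qed

lemma tp_diff: "tp x z - tp x (z+1) = (if z \<le> int x then 1 else 0)"
  unfolding tp_def by auto

lemma TT_diff: "TT N \<sigma> z - TT N \<sigma> (z+1) = Fc N \<sigma> z"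
proof -
  have "(\<Sum>a\<in>{1..N}. tp (\<sigma> a) z) - (\<Sum>a\<in>{1..N}. tp (\<sigma> a) (z+1))
      = (\<Sum>a\<in>{1..N}. (if z \<le> int (\<sigma> a) then 1 else 0))"
    by (simp add: sum_subtractf[symmetric] tp_diff)
  also have "\<dots> = real (card {a\<in>{1..N}. z \<le> int (\<sigma> a)})"
    by (simp add: sum.If_cases Int_def)
  finally show ?thesis unfolding TT_def Fc_def by (simp add: diff_divide_distrib[symmetric])
qed

lemma TT_nonneg: "0 \<le> TT N \<sigma> y" unfolding TT_def tp_def by (intro divide_nonneg_nonneg sum_nonneg) auto

lemma TT_mono1: "TT N \<sigma> (z+1) \<le> TT N \<sigma> z" using TT_diff[of N \<sigma> z] Fc_nonneg[of N \<sigma> z] by simp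

lemma TT_mono: "y \<le> z \<Longrightarrow> TT N \<sigma> z \<le> TT N \<sigma> y"
proof (induct z rule: int_ge_induct)
  case base then show ?case by simp
next
  case (step i) then show ?case using TT_mono1[of N \<sigma> i] by linarith
qed

lemma Ps_step: "b + 1 \<le> z \<Longrightarrow> Ps N \<sigma> b z = Ps N \<sigma> b (z-1) + TT N \<sigma> z"
proof -
  assume "b + 1 \<le> z"
  then have "{b+1..z} = insert z {b+1..z-1}" by auto
  then show ?thesis unfolding Ps_def by simp
qed

lemma Ps_nonneg: "0 \<le> Ps N \<sigma> b z" unfolding Ps_def by (intro sum_nonneg TT_nonneg)

lemma Ps_le: assumes "0 \<le> b" shows "Ps N \<sigma> b z \<le> real (\<Sum>a=1..N. (\<sigma> a)^2) / real N"
proof -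
  have per: "(\<Sum>y\<in>{b+1..z}. tp x y) \<le> real (x^2)" for x
  proof -
    have "(\<Sum>y\<in>{b+1..z}. tp x y) \<le> (\<Sum>y\<in>{b+1..z}. if y \<le> int x then real x else 0)"
      using assms by (intro sum_mono) (auto simp: tp_def)
    also have "\<dots> = real x * real (card {y\<in>{b+1..z}. y \<le> int x})"
      by (simp add: sum.If_cases Int_def)
    also have "\<dots> \<le> real x * real (card {1..int x})"
    proof -
      have "card {y\<in>{b+1..z}. y \<le> int x} \<le> card {1..int x}"
        using assms by (intro card_mono) auto
      then show ?thesis by (intro mult_left_mono) auto
    qed
    also have "\<dots> = real (x^2)" by (simp add: power2_eq_square)
    finally show ?thesis .
  qed
  have "Ps N \<sigma> b z = (\<Sum>a\<in>{1..N}. \<Sum>y\<in>{b+1..z}. tp (\<sigma> a) y) / real N"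
    unfolding Ps_def TT_def by (simp add: sum_divide_distrib[symmetric] sum.swap[of _ "{b+1..z}"])
  also have "\<dots> \<le> (\<Sum>a\<in>{1..N}. real ((\<sigma> a)^2)) / real N"
    by (intro divide_right_mono sum_mono per) auto
  finally show ?thesis by simp
qed

lemma key_exp:
  fixes f t :: real
  assumes "0 \<le> f" "f \<le> t" "f \<le> 1/2"
  shows "1 \<le> (1 - f) * (exp (4*t) + exp (4*f - 4*t)) / 2"
proof -
  define a where "a = exp (4*t)"
  define bb where "bb = exp (4*f)"
  have a1: "1 \<le> a" unfolding a_def using assms by simp
  have ab: "bb \<le> a" unfolding a_def bb_def using assms by simp
  have apos: "0 < a" using a1 by simp
  have e: "exp (4*f - 4*t) = bb / a" unfolding a_def bb_def by (simp add: exp_diff)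
  have "a + bb / a - bb - 1 = (a - 1) * (a - bb) / a" using apos by (simp add: field_simps)
  also have "\<dots> \<ge> 0" using a1 ab apos by (intro divide_nonneg_pos mult_nonneg_nonneg) auto
  finally have s1: "a + bb / a \<ge> bb + 1" by simp
  have s2: "bb \<ge> 1 + 4*f" unfolding bb_def using exp_ge_add_one_self[of "4*f"] by simp
  have "0 \<le> f * (1 - 2*f)" using assms by (intro mult_nonneg_nonneg) auto
  then have "1 \<le> (1 - f) * (2 + 4*f) / 2" by (simp add: algebra_simps)
  also have "\<dots> \<le> (1 - f) * (a + bb / a) / 2"
    using s1 s2 assms by (intro divide_right_mono mult_left_mono) auto
  finally show ?thesis using e by (simp add: a_def)
qed

lemma w_prop:
  assumes N: "N \<ge> 1" and b: "0 \<le> b" and z: "b + 1 \<le> z" and sum: "real (\<Sum>a=1..N. \<sigma> a) < real N / 2"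
  shows "ww N \<sigma> b z \<le> cc N \<sigma> z * (ww N \<sigma> b (z-1) + ww N \<sigma> b (z+1)) / 2"
proof -
  let ?t = "TT N \<sigma> z" and ?f = "Fc N \<sigma> z" and ?P = "Ps N \<sigma> b z"
  have f0: "0 \<le> ?f" by (rule Fc_nonneg)
  have ft: "?f \<le> ?t" using TT_diff[of N \<sigma> z] TT_nonneg[of N \<sigma> "z+1"] by simp
  have fh: "?f \<le> 1/2" using Fc_half[OF N _ sum] z b by simp
  have m: "Ps N \<sigma> b (z-1) = ?P - ?t" using Ps_step[OF z, of N \<sigma>] by simp
  have p: "Ps N \<sigma> b (z+1) = ?P + (?t - ?f)" using Ps_step[of b "z+1" N \<sigma>] z TT_diff[of N \<sigma> z] by simp
  have wm: "ww N \<sigma> b (z-1) = ww N \<sigma> b z * exp (4 * ?t)"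
    unfolding ww_def m by (simp add: exp_add[symmetric] algebra_simps)
  have wp: "ww N \<sigma> b (z+1) = ww N \<sigma> b z * exp (4 * ?f - 4 * ?t)"
    unfolding ww_def p by (simp add: exp_add[symmetric] algebra_simps)
  have "ww N \<sigma> b z = ww N \<sigma> b z * 1" by simp
  also have "\<dots> \<le> ww N \<sigma> b z * ((1 - ?f) * (exp (4 * ?t) + exp (4 * ?f - 4 * ?t)) / 2)"
    by (intro mult_left_mono key_exp f0 ft fh) (simp add: ww_def)
  also have "\<dots> = cc N \<sigma> z * (ww N \<sigma> b (z-1) + ww N \<sigma> b (z+1)) / 2"
    unfolding wm wp cc_Fc[OF N] by (simp add: algebra_simps)
  finally show ?thesis .
qed



lemma exp_lip: fixes x y :: real assumes "0 \<le> x" "x \<le> y"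
  shows "exp (-4*x) - exp (-4*y) \<le> 4 * (y - x)"
proof -
  have "exp (-4*y) = exp (-4*x) * exp (-(4*(y-x)))" by (simp add: exp_add[symmetric] algebra_simps)
  then have "exp (-4*x) - exp (-4*y) = exp (-4*x) * (1 - exp (-(4*(y-x))))" by (simp add: algebra_simps)
  also have "\<dots> \<le> 1 * (4*(y-x))"
  proof (rule mult_mono)
    show "exp (-4*x) \<le> 1" using assms by simp
    have "exp (-(4*(y-x))) \<ge> 1 + (-(4*(y-x)))" by (rule exp_ge_add_one_self)
    then show "1 - exp (-(4*(y-x))) \<le> 4*(y-x)" by linarith
  qed (use assms in auto)
  finally show ?thesis by simp
qed

lemma ww_pos: "0 < ww N \<sigma> b z" by (simp add: ww_def)
lemma ww_le1: "ww N \<sigma> b z \<le> 1" using Ps_nonneg[of N \<sigma> b z] by (simp add: ww_def)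

lemma ww_diff:
  assumes z: "b + 1 \<le> z"
  shows "ww N \<sigma> b (z+1) \<le> ww N \<sigma> b (z-1)" "ww N \<sigma> b (z-1) - ww N \<sigma> b (z+1) \<le> 8 * TT N \<sigma> (b+1)"
proof -
  have p1: "Ps N \<sigma> b (z+1) = Ps N \<sigma> b (z-1) + TT N \<sigma> z + TT N \<sigma> (z+1)"
    using Ps_step[of b "z+1" N \<sigma>] Ps_step[of b z N \<sigma>] z by simp
  have t1: "TT N \<sigma> z \<le> TT N \<sigma> (b+1)" "TT N \<sigma> (z+1) \<le> TT N \<sigma> (b+1)"
    using z by (auto intro!: TT_mono)
  have le: "Ps N \<sigma> b (z-1) \<le> Ps N \<sigma> b (z+1)" using p1 TT_nonneg[of N \<sigma>] by (simp add: add_nonneg_nonneg)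
  show "ww N \<sigma> b (z+1) \<le> ww N \<sigma> b (z-1)" unfolding ww_def using le by simp
  have "ww N \<sigma> b (z-1) - ww N \<sigma> b (z+1) \<le> 4 * (Ps N \<sigma> b (z+1) - Ps N \<sigma> b (z-1))"
    unfolding ww_def by (rule exp_lip[OF Ps_nonneg le])
  also have "\<dots> \<le> 8 * TT N \<sigma> (b+1)" using p1 t1 by simp
  finally show "ww N \<sigma> b (z-1) - ww N \<sigma> b (z+1) \<le> 8 * TT N \<sigma> (b+1)" .
qed

lemma TT_b_bound:
  assumes N: "N \<ge> 1" and b: "b = int (s div 2)"
  shows "TT N \<sigma> (b+1) * (real s - real_of_int b) \<le> real (\<Sum>a=1..N. (\<sigma> a)^2) / real N"
proof -
  have sb: "real s - real_of_int b \<le> real_of_int b + 1" "0 \<le> real s - real_of_int b" using b by linarith+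
  have per: "tp x (b+1) * (real s - real_of_int b) \<le> real (x^2)" for x
  proof (cases "real x \<le> real_of_int b")
    case True then show ?thesis by (simp add: tp_def)
  next
    case False
    then have "tp x (b+1) = real x - real_of_int b" by (simp add: tp_def)
    moreover have "real x - real_of_int b \<le> real x" using b by simp
    moreover have "real s - real_of_int b \<le> real x"
    proof -
      have "b < int x" using False by (metis of_int_of_nat_eq of_int_less_iff not_le)
      then have "real_of_int (b+1) \<le> real_of_int (int x)" using \<open>b < int x\<close> by simp
      then show ?thesis using sb by simp
    qed
    ultimately have "(real x - real_of_int b) * (real s - real_of_int b) \<le> real x * real x"
      using sb(2) False by (intro mult_mono) auto
    then show ?thesis using \<open>tp x (b+1) = _\<close> by (simp add: power2_eq_square)
  qed
  have "TT N \<sigma> (b+1) * (real s - real_of_int b) = (\<Sum>a\<in>{1..N}. tp (\<sigma> a) (b+1) * (real s - real_of_int b)) / real N"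
    unfolding TT_def by (simp add: sum_distrib_right)
  also have "\<dots> \<le> (\<Sum>a\<in>{1..N}. real ((\<sigma> a)^2)) / real N"
    by (intro divide_right_mono sum_mono per) auto
  finally show ?thesis by simp
qed

definition Qf :: "nat \<Rightarrow> int \<Rightarrow> int \<Rightarrow> real" where
  "Qf s b z = (real_of_int z - real_of_int b) * (2 * real s - real_of_int b - real_of_int z)"
definition Uf :: "nat \<Rightarrow> int \<Rightarrow> int \<Rightarrow> real" where
  "Uf s b z = (if z \<le> b then 0 else if z \<le> int s then Qf s b z else (real s - real_of_int b)^2)"
definition GG :: "nat \<Rightarrow> (nat\<Rightarrow>nat) \<Rightarrow> nat \<Rightarrow> real \<Rightarrow> int \<Rightarrow> real" where
  "GG N \<sigma> s K z = ww N \<sigma> (int (s div 2)) z * Uf s (int (s div 2)) z / K"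

lemma Qf_le: "Qf s b z \<le> (real s - real_of_int b)^2"
proof -
  have "(real s - real_of_int b)^2 - Qf s b z = (real s - real_of_int z)^2"
    unfolding Qf_def by (simp add: power2_eq_square algebra_simps)
  then show ?thesis by (metis diff_ge_0_iff_ge zero_le_power2)
qed

lemma Uf_nonneg: "b \<le> int s \<Longrightarrow> 0 \<le> Uf s b z"
  unfolding Uf_def Qf_def by (auto intro!: mult_nonneg_nonneg)

lemma Uf_le: "Uf s b z \<le> (real s - real_of_int b)^2"
  unfolding Uf_def using Qf_le[of s b z] by auto

lemma G_sub:
  assumes N: "N \<ge> 1" and s: "s \<ge> 1" and A: "A \<ge> 0"
    and sum: "real (\<Sum>a=1..N. \<sigma> a) < real N / 2"
    and sq: "real (\<Sum>a=1..N. (\<sigma> a)^2) \<le> A * real N"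
    and K: "K = 1 + 8 * A"
  shows "GG N \<sigma> s K z \<le> (if z \<le> int s then 1 else 0) + cc N \<sigma> z * (GG N \<sigma> s K (z-1) + GG N \<sigma> s K (z+1)) / 2"
proof -
  define b where "b = int (s div 2)"
  have b0: "0 \<le> b" and bs: "b < int s" and bs2: "b + 1 \<le> int s" using s by (auto simp: b_def)
  have Kpos: "K > 0" using K A by simp
  let ?w = "ww N \<sigma> b" and ?U = "Uf s b" and ?c = "cc N \<sigma> z"
  have G: "GG N \<sigma> s K x = ?w x * ?U x / K" for x by (simp add: GG_def b_def)
  have c0: "0 \<le> ?c" and c1: "?c \<le> 1" using cc_nonneg cc_le1[OF N] by auto
  have Gnn: "0 \<le> GG N \<sigma> s K x" for x
    unfolding G using ww_pos[of N \<sigma> b x] Uf_nonneg[of b s x] bs Kpos by auto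
  show ?thesis
  proof (cases "z \<le> b")
    case True
    then have "GG N \<sigma> s K z = 0" unfolding G by (simp add: Uf_def)
    moreover have "0 \<le> ?c * (GG N \<sigma> s K (z-1) + GG N \<sigma> s K (z+1)) / 2"
      using c0 Gnn by simp
    ultimately show ?thesis using True bs by simp
  next
    case zb: False
    show ?thesis
    proof (cases "z \<le> int s")
      case False
      have U2: "?U (z-1) = (real s - real_of_int b)^2"
      proof (cases "z - 1 \<le> int s")
        case True
        then have "z = int s + 1" using False by simp
        then show ?thesis using bs by (simp add: Uf_def Qf_def power2_eq_square)
      next
        case F2: False
        then show ?thesis using bs by (simp add: Uf_def)
      qed
      have U: "?U z = (real s - real_of_int b)^2" "?U (z-1) = (real s - real_of_int b)^2"
        "?U (z+1) = (real s - real_of_int b)^2"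
        using False zb bs U2 by (auto simp: Uf_def)
      have "?w z \<le> ?c * (?w (z-1) + ?w (z+1)) / 2"
        using w_prop[OF N b0 _ sum, of z] zb by simp
      then have "?w z * ((real s - real_of_int b)^2 / K) \<le> ?c * (?w (z-1) + ?w (z+1)) / 2 * ((real s - real_of_int b)^2 / K)"
        using Kpos by (intro mult_right_mono) auto
      then show ?thesis unfolding G U using False by (simp add: algebra_simps)
    next
      case True
      define t where "t = TT N \<sigma> (b+1)"
      have zz: "b + 1 \<le> z" using zb by simp
      have wprop: "?w z \<le> ?c * (?w (z-1) + ?w (z+1)) / 2" using w_prop[OF N b0 zz sum] .
      have wd: "?w (z+1) \<le> ?w (z-1)" "?w (z-1) - ?w (z+1) \<le> 8 * t"
        using ww_diff[OF zz, of N \<sigma>] by (auto simp: t_def)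
      have tb: "t * (real s - real_of_int b) \<le> A"
      proof -
        have "t * (real s - real_of_int b) \<le> real (\<Sum>a=1..N. (\<sigma> a)^2) / real N"
          using TT_b_bound[OF N b_def] by (simp add: t_def)
        also have "\<dots> \<le> A" using sq N by (simp add: divide_simps)
        finally show ?thesis .
      qed
      define Q0 where "Q0 = Qf s b z"
      have Q0nn: "0 \<le> Q0" unfolding Q0_def Qf_def using zb True by (auto intro!: mult_nonneg_nonneg)
      have Um: "?U (z-1) = Q0 - (2 * real s - 2 * real_of_int z + 1)"
      proof (cases "z - 1 \<le> b")
        case True
        then have "z = b + 1" using zb by simp
        then show ?thesis unfolding Q0_def by (simp add: Uf_def Qf_def algebra_simps)
      next
        case False
        then show ?thesis using \<open>z \<le> int s\<close> unfolding Q0_def by (simp add: Uf_def Qf_def algebra_simps)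
      qed
      have Up: "?U (z+1) \<ge> Q0 + (2 * real s - 2 * real_of_int z - 1)"
        using True zb Qf_le[of s b "z+1"] unfolding Q0_def
        by (cases "z + 1 \<le> int s") (auto simp: Uf_def Qf_def algebra_simps power2_eq_square)
      have U0: "?U z = Q0" using True zb by (simp add: Uf_def Q0_def)
      have wm1: "?w (z-1) \<le> 1" "?w (z+1) \<le> 1" "0 < ?w (z+1)" by (auto simp: ww_le1 ww_pos)
      have sz: "0 \<le> real s - real_of_int z" "real s - real_of_int z \<le> real s - real_of_int b" using True zb by auto
      have step1: "?c * (?w (z-1) * ?U (z-1) + ?w (z+1) * ?U (z+1)) / 2 \<ge>
         ?c * Q0 * (?w (z-1) + ?w (z+1)) / 2
         - ?c * ((?w (z-1) - ?w (z+1)) * (2 * real s - 2 * real_of_int z) + ?w (z-1) + ?w (z+1)) / 2"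
      proof -
        have "?w (z+1) * ?U (z+1) \<ge> ?w (z+1) * (Q0 + (2 * real s - 2 * real_of_int z - 1))"
          using Up wm1 by (intro mult_left_mono) auto
        then have "?c * (?w (z-1) * ?U (z-1) + ?w (z+1) * ?U (z+1)) / 2 \<ge>
           ?c * (?w (z-1) * ?U (z-1) + ?w (z+1) * (Q0 + (2 * real s - 2 * real_of_int z - 1))) / 2"
          using c0 by (intro divide_right_mono mult_left_mono) auto
        moreover have "?c * (?w (z-1) * (Q0 - (2 * real s - 2 * real_of_int z + 1)) + ?w (z+1) * (Q0 + (2 * real s - 2 * real_of_int z - 1))) / 2
          = ?c * Q0 * (?w (z-1) + ?w (z+1)) / 2
         - ?c * ((?w (z-1) - ?w (z+1)) * (2 * real s - 2 * real_of_int z) + ?w (z-1) + ?w (z+1)) / 2"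
          by (simp add: field_simps)
        ultimately show ?thesis unfolding Um by linarith
      qed
      have step2: "?c * Q0 * (?w (z-1) + ?w (z+1)) / 2 \<ge> Q0 * ?w z"
        using mult_left_mono[OF wprop Q0nn] by (simp add: algebra_simps)
      have step3: "?c * ((?w (z-1) - ?w (z+1)) * (2 * real s - 2 * real_of_int z)) / 2 \<le> 8 * A"
      proof -
        have "?c * ((?w (z-1) - ?w (z+1)) * (2 * real s - 2 * real_of_int z)) / 2
            \<le> 1 * ((?w (z-1) - ?w (z+1)) * (real s - real_of_int z))"
        proof -
          have "?c * ((?w (z-1) - ?w (z+1)) * (2 * real s - 2 * real_of_int z)) / 2 = ?c * ((?w (z-1) - ?w (z+1)) * (real s - real_of_int z))"
            by (simp add: field_simps)
          also have "\<dots> \<le> 1 * ((?w (z-1) - ?w (z+1)) * (real s - real_of_int z))"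
            using c1 wd sz by (intro mult_right_mono mult_nonneg_nonneg) auto
          finally show ?thesis .
        qed
        also have "\<dots> \<le> (8 * t) * (real s - real_of_int b)"
          using wd sz by (simp, intro mult_mono, auto)
        also have "\<dots> \<le> 8 * A" using tb by simp
        finally show ?thesis .
      qed
      have step4: "?c * (?w (z-1) + ?w (z+1)) / 2 \<le> 1"
      proof -
        have "?c * (?w (z-1) + ?w (z+1)) \<le> 1 * 2" using c0 c1 wm1 ww_pos[of N \<sigma> b "z-1"] by (intro mult_mono) auto
        then show ?thesis by simp
      qed
      have main: "?w z * Q0 \<le> K + ?c * (?w (z-1) * ?U (z-1) + ?w (z+1) * ?U (z+1)) / 2"
        using step1 step2 step3 step4 K by (simp add: algebra_simps add_divide_distrib diff_divide_distrib)
      have "GG N \<sigma> s K z = ?w z * Q0 / K" unfolding G U0 ..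
      also have "\<dots> \<le> (K + ?c * (?w (z-1) * ?U (z-1) + ?w (z+1) * ?U (z+1)) / 2) / K"
        using main Kpos by (intro divide_right_mono) auto
      also have "\<dots> = 1 + ?c * (GG N \<sigma> s K (z-1) + GG N \<sigma> s K (z+1)) / 2"
        unfolding G using Kpos by (simp add: field_simps)
      finally show ?thesis using True by simp
    qed
  qed
qed



lemma maxp:
  fixes h c :: "int \<Rightarrow> real"
  assumes c: "\<And>z. 0 \<le> c z \<and> c z \<le> 1"
    and rec: "\<And>z. h z \<le> c z * (h (z-1) + h (z+1)) / 2"
    and lo: "\<And>z. z \<le> lo \<Longrightarrow> h z \<le> 0" and hi: "\<And>z. hi \<le> z \<Longrightarrow> h z \<le> 0"
  shows "h z \<le> 0"
proof (rule ccontr)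
  assume "\<not> h z \<le> 0"
  then have hz: "h z > 0" by simp
  have "\<not> z \<le> lo" using hz lo[of z] by linarith
  moreover have "\<not> hi \<le> z" using hz hi[of z] by linarith
  ultimately have zS: "z \<in> {lo..hi}" by simp
  define m where "m = Max (h ` {lo..hi})"
  have mge: "h x \<le> m" if "x \<in> {lo..hi}" for x unfolding m_def using that by (intro Max_ge) auto
  have min: "m \<in> h ` {lo..hi}" unfolding m_def using zS by (intro Max_in) auto
  define Z where "Z = {x\<in>{lo..hi}. h x = m}"
  have Zfin: "finite Z" unfolding Z_def by (rule finite_subset[of _ "{lo..hi}"]) auto
  have Zne: "Z \<noteq> {}" using min by (auto simp: Z_def)
  define z1 where "z1 = Max Z"
  have z1Z: "z1 \<in> Z" unfolding z1_def using Zfin Zne by (rule Max_in)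
  have z1max: "x \<le> z1" if "x \<in> Z" for x unfolding z1_def using Zfin that by (rule Max_ge)
  have mpos: "m > 0" using mge[OF zS] hz by simp
  have hz1: "h z1 = m" and z1S: "z1 \<in> {lo..hi}" using z1Z by (auto simp: Z_def)
  have hp: "h (z1+1) < m"
  proof (cases "z1 + 1 \<in> {lo..hi}")
    case True
    have "z1 + 1 \<notin> Z" using z1max[of "z1+1"] by linarith
    then show ?thesis using True mge[OF True] by (auto simp: Z_def)
  next
    case False
    then have "hi \<le> z1 + 1" using z1S by auto
    then show ?thesis using hi[of "z1+1"] mpos by linarith
  qed
  have hm: "h (z1-1) \<le> m"
  proof (cases "z1 - 1 \<in> {lo..hi}")
    case True then show ?thesis by (rule mge)
  next
    case False
    then have "z1 - 1 \<le> lo" using z1S by auto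
    then show ?thesis using lo[of "z1-1"] mpos by linarith
  qed
  define x where "x = (h (z1-1) + h (z1+1)) / 2"
  have xm: "x < m" unfolding x_def using hp hm by simp
  have "m \<le> c z1 * x" using rec[of z1] hz1 by (simp add: x_def)
  moreover have "c z1 * x < m"
  proof (cases "x \<ge> 0")
    case True
    then have "c z1 * x \<le> 1 * x" using c[of z1] by (intro mult_right_mono) auto
    then show ?thesis using xm by simp
  next
    case False
    then have "c z1 * x \<le> 0" using c[of z1] by (simp add: mult_nonneg_nonpos)
    then show ?thesis using mpos by simp
  qed
  ultimately show False by simp
qed

lemma final_real:
  fixes q :: "int \<Rightarrow> real"
  assumes N: "N \<ge> 1" and s: "s \<ge> 1" and A: "A > 0"
    and sum: "real (\<Sum>a=1..N. \<sigma> a) < real N / 2"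
    and sq: "real (\<Sum>a=1..N. (\<sigma> a)^2) \<le> A * real N"
    and qnn: "\<And>z. 0 \<le> q z"
    and rec: "\<And>z. q z = (if z \<le> int s then 1 / real N else 0) + cc N \<sigma> z * ((q (z-1) + q (z+1)) / 2)"
    and M: "s \<le> M"
  shows "exp (-4*A) / (8 * (1 + 8*A)) * real (s^2) / real N \<le> q (int M + 1)"
proof -
  define K where "K = 1 + 8*A"
  define b where "b = int (s div 2)"
  have Kpos: "K \<ge> 1" using A by (simp add: K_def)
  define E where "E = exp (-4*A) * real (s^2) / (8 * K * (real M + 1))"
  have Epos: "E > 0" using s Kpos by (simp add: E_def)
  define G where "G = GG N \<sigma> s K"
  define g where "g z = (G z - E * max 0 (real_of_int z)) / real N" for z
  define h where "h z = g z - q z" for z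
  have Nr: "real N > 0" using N by simp
  have Gsub: "G z \<le> (if z \<le> int s then 1 else 0) + cc N \<sigma> z * (G (z-1) + G (z+1)) / 2" for z
    unfolding G_def using G_sub[OF N s _ sum sq K_def] A by simp
  have Esub: "- E * max 0 (real_of_int z) \<le> cc N \<sigma> z * (- E * max 0 (real_of_int (z-1)) - E * max 0 (real_of_int (z+1))) / 2" for z
  proof (cases "z \<le> 0")
    case True then show ?thesis by (simp add: cc_neg)
  next
    case False
    then have e: "max 0 (real_of_int (z-1)) + max 0 (real_of_int (z+1)) = 2 * real_of_int z"
      "max 0 (real_of_int z) = real_of_int z" by auto
    have "cc N \<sigma> z * (E * real_of_int z) \<le> 1 * (E * real_of_int z)"
      using cc_le1[OF N] False Epos by (intro mult_right_mono) auto
    then show ?thesis using e by (simp add: algebra_simps)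
  qed
  have hrec: "h z \<le> cc N \<sigma> z * (h (z-1) + h (z+1)) / 2" for z
  proof -
    have "G z - E * max 0 (real_of_int z) \<le> (if z \<le> int s then 1 else 0)
       + cc N \<sigma> z * ((G (z-1) - E * max 0 (real_of_int (z-1))) + (G (z+1) - E * max 0 (real_of_int (z+1)))) / 2"
      using Gsub[of z] Esub[of z] by (simp add: algebra_simps add_divide_distrib diff_divide_distrib)
    then have "g z \<le> ((if z \<le> int s then 1 else 0)
       + cc N \<sigma> z * ((G (z-1) - E * max 0 (real_of_int (z-1))) + (G (z+1) - E * max 0 (real_of_int (z+1)))) / 2) / real N"
      unfolding g_def using Nr by (intro divide_right_mono) auto
    also have "\<dots> = (if z \<le> int s then 1 / real N else 0) + cc N \<sigma> z * (g (z-1) + g (z+1)) / 2"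
      unfolding g_def using Nr by (cases "z \<le> int s") (simp_all add: field_simps)
    finally have "g z \<le> (if z \<le> int s then 1 / real N else 0) + cc N \<sigma> z * (g (z-1) + g (z+1)) / 2" .
    then show ?thesis unfolding h_def using rec[of z] by (simp add: algebra_simps add_divide_distrib diff_divide_distrib)
  qed
  have Gle: "G z \<le> real (s^2)" for z
  proof -
    have "G z = ww N \<sigma> b z * Uf s b z / K" by (simp add: G_def GG_def b_def)
    also have "\<dots> \<le> 1 * (real s - real_of_int b)^2 / 1"
      using ww_le1 ww_pos Uf_nonneg[of b s z] Uf_le[of s b z] Kpos
      by (intro frac_le mult_mono) (auto simp: b_def)
    also have "\<dots> \<le> real (s^2)"
    proof -
      have "0 \<le> real s - real_of_int b" "real s - real_of_int b \<le> real s" by (auto simp: b_def)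
      then show ?thesis by (simp add: power_mono)
    qed
    finally show ?thesis .
  qed
  have hlo: "h z \<le> 0" if "z \<le> b" for z
  proof -
    have "G z = 0" using that by (simp add: G_def GG_def b_def Uf_def)
    moreover have "0 \<le> E * max 0 (real_of_int z) / real N" using Epos Nr by auto
    ultimately show ?thesis unfolding h_def g_def using qnn[of z] by simp
  qed
  define hi where "hi = ceiling (real (s^2) / E) + 1"
  have hhi: "h z \<le> 0" if "hi \<le> z" for z
  proof -
    have "real (s^2) / E < real_of_int z" using that unfolding hi_def by linarith
    then have "real (s^2) < E * real_of_int z" using Epos by (simp add: divide_simps mult.commute)
    moreover have "E * real_of_int z \<le> E * max 0 (real_of_int z)" using Epos by (intro mult_left_mono) auto
    ultimately have "G z - E * max 0 (real_of_int z) \<le> 0" using Gle[of z] by linarith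
    then have "(G z - E * max 0 (real_of_int z)) / real N \<le> 0" using Nr by (simp add: divide_nonpos_pos)
    then show ?thesis unfolding h_def g_def using qnn[of z] by simp
  qed
  have "h (int M + 1) \<le> 0"
    by (rule maxp[of "cc N \<sigma>" h b hi]) (use cc_nonneg cc_le1[OF N] hrec hlo hhi in auto)
  then have qge: "g (int M + 1) \<le> q (int M + 1)" by (simp add: h_def)
  have w: "exp (-4*A) \<le> ww N \<sigma> b (int M + 1)"
  proof -
    have "Ps N \<sigma> b (int M + 1) \<le> A"
    proof -
      have "Ps N \<sigma> b (int M + 1) \<le> real (\<Sum>a=1..N. (\<sigma> a)^2) / real N"
        by (rule Ps_le) (simp add: b_def)
      also have "\<dots> \<le> A" using sq Nr by (simp add: pos_divide_le_eq)
      finally show ?thesis .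
    qed
    then show ?thesis unfolding ww_def by simp
  qed
  have sb: "real s / 2 \<le> real s - real_of_int b" by (simp add: b_def)
  have U: "Uf s b (int M + 1) = (real s - real_of_int b)^2" using M by (simp add: Uf_def b_def)
  have "real (s^2) / 4 \<le> (real s - real_of_int b)^2"
  proof -
    have "(real s / 2)^2 \<le> (real s - real_of_int b)^2" using sb by (intro power_mono) auto
    then show ?thesis by (simp add: power_divide)
  qed
  then have "exp (-4*A) * (real (s^2) / 4) \<le> ww N \<sigma> b (int M + 1) * Uf s b (int M + 1)"
    unfolding U using w ww_pos[of N \<sigma> b "int M + 1"] by (intro mult_mono) auto
  then have Gb: "exp (-4*A) * real (s^2) / (4 * K) \<le> G (int M + 1)"
    using Kpos by (simp add: G_def GG_def b_def[symmetric] divide_simps mult.commute)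
  have Eb: "E * max 0 (real_of_int (int M + 1)) = exp (-4*A) * real (s^2) / (8 * K)"
  proof -
    have m: "max 0 (real_of_int (int M + 1)) = real M + 1" by simp
    have "K \<noteq> 0" "real M + 1 \<noteq> 0" using Kpos by auto
    have gen: "\<And>X y. y \<noteq> 0 \<Longrightarrow> K \<noteq> 0 \<Longrightarrow> X / (8 * K * y) * y = X / (8 * K)" by (simp add: field_simps)
    show ?thesis unfolding E_def m by (rule gen) (use \<open>K \<noteq> 0\<close> \<open>real M + 1 \<noteq> 0\<close> in auto)
  qed
  have g2: "X / (4 * K) - X / (8 * K) = X / (8 * K)" for X using Kpos by (simp add: field_simps)
  have "exp (-4*A) / (8 * (1 + 8*A)) * real (s^2) / real N = (exp (-4*A) * real (s^2) / (4 * K) - exp (-4*A) * real (s^2) / (8 * K)) / real N"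
    unfolding g2 by (simp add: K_def)
  also have "\<dots> \<le> g (int M + 1)"
  proof -
    have "exp (-4*A) * real (s^2) / (4 * K) - exp (-4*A) * real (s^2) / (8 * K)
       \<le> G (int M + 1) - E * max 0 (real_of_int (int M + 1))"
      using Gb Eb by linarith
    then show ?thesis unfolding g_def using Nr by (intro divide_right_mono) auto
  qed
  finally show ?thesis using qge by simp
qed


lemma attach_eq: "attach_prob N \<sigma> i = qf N \<sigma> i (int (Max (\<sigma> ` {1..N})) + 1)"
proof -
  have "attaches_to N \<sigma> i = Ev \<sigma> i (int (Max (\<sigma> ` {1..N})) + 1)"
    unfolding attaches_to_def Ev_def expl_Z_def expl_X_def Wk_def explorer_space_def space_stream_space
    by simp
  then show ?thesis unfolding attach_prob_def qf_def by simp
qed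

theorem corollary4p1:
  shows "\<forall>A::real. A > 0 \<longrightarrow> (\<exists>\<kappa>::real. \<kappa> > 0 \<and>
    (\<forall>N::nat. N \<ge> 2 \<longrightarrow> (\<forall>\<sigma>::nat \<Rightarrow> nat. early_regime A N \<sigma> \<longrightarrow>
      (\<forall>i \<in> {1..N}. attach_prob N \<sigma> i \<ge> \<kappa> * real ((\<sigma> i)^2) / real N))))"
proof (intro allI impI)
  fix A :: real assume A: "A > 0"
  show "\<exists>\<kappa>::real. \<kappa> > 0 \<and>
    (\<forall>N::nat. N \<ge> 2 \<longrightarrow> (\<forall>\<sigma>::nat \<Rightarrow> nat. early_regime A N \<sigma> \<longrightarrow>
      (\<forall>i \<in> {1..N}. attach_prob N \<sigma> i \<ge> \<kappa> * real ((\<sigma> i)^2) / real N)))"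
  proof (intro exI[of _ "exp (-4*A) / (8 * (1 + 8*A))"] conjI allI impI ballI)
    show "0 < exp (-4*A) / (8 * (1 + 8*A))" using A by simp
    fix N :: nat and \<sigma> :: "nat \<Rightarrow> nat" and i
    assume N2: "N \<ge> 2" and er: "early_regime A N \<sigma>" and i: "i \<in> {1..N}"
    have N: "N \<ge> 1" using N2 by simp
    have sq: "real (\<Sum>a=1..N. (\<sigma> a)^2) \<le> A * real N" and sum: "real (\<Sum>a=1..N. \<sigma> a) < real N / 2"
      using er by (auto simp: early_regime_def)
    define M where "M = Max (\<sigma> ` {1..N})"
    have sM: "\<sigma> i \<le> M" unfolding M_def using i by (intro Max_ge) auto
    show "exp (-4*A) / (8 * (1 + 8*A)) * real ((\<sigma> i)^2) / real N \<le> attach_prob N \<sigma> i"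
    proof (cases "\<sigma> i = 0")
      case True
      then show ?thesis by (simp add: attach_prob_def)
    next
      case False
      have "exp (-4*A) / (8 * (1 + 8*A)) * real ((\<sigma> i)^2) / real N \<le> qf N \<sigma> i (int M + 1)"
      proof (rule final_real[OF N _ A sum sq])
        show "1 \<le> \<sigma> i" using False by simp
        show "0 \<le> qf N \<sigma> i z" for z by (simp add: qf_def)
        show "qf N \<sigma> i z = (if z \<le> int (\<sigma> i) then 1 / real N else 0) + cc N \<sigma> z * ((qf N \<sigma> i (z-1) + qf N \<sigma> i (z+1)) / 2)" for z
          using q_rec[OF N i, of \<sigma> z] by (simp add: cc_def)
        show "\<sigma> i \<le> M" by (rule sM)
      qed
      then show ?thesis using attach_eq[of N \<sigma> i] by (simp add: M_def)
    qed
  qed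
qed

end
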